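(* Let $G=\mathrm{SL}_2(q)$ with $q$ a prime power. If $q$ is even, then every subgroup of $G$ is a perfect code of $G$. If $q$ is odd, then a subgroup $H$ of $G$ is a perfect code of $G$ if and only if either $|H|_2=1$ or $|H|_2=|G|_2$.
   Context: $|X|_2$ denotes the largest power of $2$ dividing $|X|$. For a group $G$ with identity $e$ and an inverse-closed subset $S\subseteq G\setminus\{e\}$, the Cayley graph $\mathrm{Cay}(G,S)$ has vertex set $G$ and edges $\{g,sg\}$ for $s\in S$, $g\in G$. A perfect code in a graph is an independent set $C$ of vertices such that every vertex outside $C$ is adjacent to exactly one vertex of $C$. A subgroup $H$ of $G$ is a perfect code of $G$ if some Cayley graph of $G$ admits $H$ as a perfect code. *)

theory Defs
  imports "HOL-Algebra.Group" "HOL-Computational_Algebra.Primes"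
begin

text \<open>The special linear group SL_2 over a field, matrices [[a,b],[c,d]] encoded as (a,b,c,d).\<close>
definition SL2_mult :: "('a::field \<times> 'a \<times> 'a \<times> 'a) \<Rightarrow> ('a \<times> 'a \<times> 'a \<times> 'a) \<Rightarrow> ('a \<times> 'a \<times> 'a \<times> 'a)" where
  "SL2_mult x y = (case x of (a,b,c,d) \<Rightarrow> case y of (e,f,g,h) \<Rightarrow>
                     (a*e + b*g, a*f + b*h, c*e + d*g, c*f + d*h))"

definition SL2 :: "('a::field \<times> 'a \<times> 'a \<times> 'a) monoid" where
  "SL2 = \<lparr> carrier = {(a,b,c,d). a * d - b * c = 1},
           monoid.mult = SL2_mult,
           monoid.one = (1,0,0,1) \<rparr>"

definition cayley_adj :: "('g, 'b) monoid_scheme \<Rightarrow> 'g set \<Rightarrow> 'g \<Rightarrow> 'g \<Rightarrow> bool" where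
  "cayley_adj G S x y \<longleftrightarrow> x \<in> carrier G \<and> y \<in> carrier G \<and>
     (\<exists>s\<in>S. y = s \<otimes>\<^bsub>G\<^esub> x \<or> x = s \<otimes>\<^bsub>G\<^esub> y)"

definition cayley_perfect_code :: "('g, 'b) monoid_scheme \<Rightarrow> 'g set \<Rightarrow> 'g set \<Rightarrow> bool" where
  "cayley_perfect_code G S C \<longleftrightarrow> C \<subseteq> carrier G \<and>
     (\<forall>x\<in>C. \<forall>y\<in>C. \<not> cayley_adj G S x y) \<and>
     (\<forall>x\<in>carrier G - C. \<exists>!c. c \<in> C \<and> cayley_adj G S x c)"

definition subgroup_perfect_code :: "('g, 'b) monoid_scheme \<Rightarrow> 'g set \<Rightarrow> bool" where
  "subgroup_perfect_code G H \<longleftrightarrow> subgroup H G \<and>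
     (\<exists>S. S \<subseteq> carrier G - {\<one>\<^bsub>G\<^esub>} \<and> (\<forall>s\<in>S. inv\<^bsub>G\<^esub> s \<in> S) \<and>
          cayley_perfect_code G S H)"

definition two_part :: "nat \<Rightarrow> nat" where
  "two_part n = 2 ^ multiplicity (2::nat) n"

end

theory Submission
  imports Defs "HOL-Algebra.Coset" "HOL-Algebra.Multiplicative_Group"
begin


lemma invol_parity:
  assumes "finite A" "\<forall>x\<in>A. f x \<in> A \<and> f (f x) = x"
  shows "even (card {x\<in>A. f x \<noteq> x})"
  using assms
proof (induct "card {x\<in>A. f x \<noteq> x}" arbitrary: A rule: less_induct)
  case less
  show ?case
  proof (cases "{x\<in>A. f x \<noteq> x} = {}")
    case True then show ?thesis by (simp only: True card.empty) simp
  next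
    case False
    then obtain x where x: "x \<in> A" "f x \<noteq> x" by auto
    define A' where "A' = A - {x, f x}"
    have fx: "f x \<in> A" "f (f x) = x" using less.prems x by auto
    have eq: "{y\<in>A'. f y \<noteq> y} = {y\<in>A. f y \<noteq> y} - {x, f x}"
      unfolding A'_def by auto
    have sub: "{x, f x} \<subseteq> {y\<in>A. f y \<noteq> y}" using x fx by auto
    have fin: "finite {y\<in>A. f y \<noteq> y}" using less.prems by auto
    have c: "card {y\<in>A'. f y \<noteq> y} = card {y\<in>A. f y \<noteq> y} - 2"
      unfolding eq using card_Diff_subset[OF _ sub] fin x(2) sub
      by (simp add: finite_subset)
    have c2: "card {y\<in>A. f y \<noteq> y} \<ge> 2"
      using card_mono[OF fin sub] x(2) by simp
    have "even (card {y\<in>A'. f y \<noteq> y})"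
    proof (rule less.hyps)
      show "card {y\<in>A'. f y \<noteq> y} < card {y\<in>A. f y \<noteq> y}" using c c2 by simp
      show "finite A'" using less.prems unfolding A'_def by simp
      show "\<forall>y\<in>A'. f y \<in> A' \<and> f (f y) = y"
        using less.prems fx unfolding A'_def by auto
    qed
    moreover have "card {y\<in>A. f y \<noteq> y} = card {y\<in>A'. f y \<noteq> y} + 2" using c c2 by simp
    ultimately show ?thesis by simp
  qed
qed

lemma invol_parity2:
  assumes "finite A" "\<forall>x\<in>A. f x \<in> A \<and> f (f x) = x"
  shows "even (card A) \<longleftrightarrow> even (card {x\<in>A. f x = x})"
proof -
  have "card A = card {x\<in>A. f x = x} + card {x\<in>A. f x \<noteq> x}"
    using assms(1) by (subst card_Un_disjoint[symmetric]) (auto intro: arg_cong[where f=card])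
  then show ?thesis using invol_parity[OF assms] by simp
qed


definition dcos :: "('g,'b) monoid_scheme \<Rightarrow> 'g set \<Rightarrow> 'g \<Rightarrow> 'g set" where
  "dcos G H x = {a \<otimes>\<^bsub>G\<^esub> x \<otimes>\<^bsub>G\<^esub> b | a b. a \<in> H \<and> b \<in> H}"

lemma dcos_iff: "y \<in> dcos G H x \<longleftrightarrow> (\<exists>a b. a \<in> H \<and> b \<in> H \<and> y = a \<otimes>\<^bsub>G\<^esub> x \<otimes>\<^bsub>G\<^esub> b)"
  unfolding dcos_def by blast

context group begin

lemma inv_cancel_l [simp]: "a \<in> carrier G \<Longrightarrow> x \<in> carrier G \<Longrightarrow> inv a \<otimes> (a \<otimes> x) = x"
  by (simp add: m_assoc[symmetric])
lemma inv_cancel_l2 [simp]: "a \<in> carrier G \<Longrightarrow> x \<in> carrier G \<Longrightarrow> a \<otimes> (inv a \<otimes> x) = x"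
  by (simp add: m_assoc[symmetric])

lemma dcos_carrier: "subgroup H G \<Longrightarrow> x \<in> carrier G \<Longrightarrow> dcos G H x \<subseteq> carrier G"
  by (auto simp: dcos_iff subgroup.mem_carrier)

lemma dcos_self: "subgroup H G \<Longrightarrow> x \<in> carrier G \<Longrightarrow> x \<in> dcos G H x"
  unfolding dcos_iff by (rule exI[of _ \<one>], rule exI[of _ \<one>]) (simp add: subgroup.one_closed)

lemma dcos_trans:
  assumes H: "subgroup H G" and x: "x \<in> carrier G" and y: "y \<in> dcos G H x"
  shows "dcos G H y = dcos G H x"
proof -
  obtain a b where ab: "a \<in> H" "b \<in> H" "y = a \<otimes> x \<otimes> b" using y by (auto simp: dcos_iff)
  have c: "a \<in> carrier G" "b \<in> carrier G" using ab H by (auto dest: subgroup.mem_carrier)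
  have xy: "x = inv a \<otimes> y \<otimes> inv b" using ab c x by (simp add: m_assoc)
  show ?thesis
  proof
    show "dcos G H y \<subseteq> dcos G H x"
    proof
      fix z assume "z \<in> dcos G H y"
      then obtain p q where pq: "p \<in> H" "q \<in> H" "z = p \<otimes> y \<otimes> q" by (auto simp: dcos_iff)
      have pc: "p \<in> carrier G" "q \<in> carrier G" using pq H by (auto dest: subgroup.mem_carrier)
      have "z = (p \<otimes> a) \<otimes> x \<otimes> (b \<otimes> q)" using pq ab c pc x by (simp add: m_assoc)
      moreover have "p \<otimes> a \<in> H" "b \<otimes> q \<in> H" using pq ab H by (auto intro: subgroup.m_closed)
      ultimately show "z \<in> dcos G H x" by (auto simp: dcos_iff)
    qed
  next
    show "dcos G H x \<subseteq> dcos G H y"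
    proof
      fix z assume "z \<in> dcos G H x"
      then obtain p q where pq: "p \<in> H" "q \<in> H" "z = p \<otimes> x \<otimes> q" by (auto simp: dcos_iff)
      have pc: "p \<in> carrier G" "q \<in> carrier G" using pq H by (auto dest: subgroup.mem_carrier)
      have "z = (p \<otimes> inv a) \<otimes> y \<otimes> (inv b \<otimes> q)" using pq ab c pc x by (simp add: m_assoc)
      moreover have "p \<otimes> inv a \<in> H" "inv b \<otimes> q \<in> H" using pq ab H
        by (auto intro: subgroup.m_closed subgroup.m_inv_closed)
      ultimately show "z \<in> dcos G H y" by (auto simp: dcos_iff)
    qed
  qed
qed

lemma dcos_inv:
  assumes H: "subgroup H G" and x: "x \<in> carrier G" and y: "y \<in> dcos G H x"
  shows "inv y \<in> dcos G H (inv x)"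
proof -
  obtain a b where ab: "a \<in> H" "b \<in> H" "y = a \<otimes> x \<otimes> b" using y by (auto simp: dcos_iff)
  have c: "a \<in> carrier G" "b \<in> carrier G" using ab H by (auto dest: subgroup.mem_carrier)
  have "inv y = inv b \<otimes> inv x \<otimes> inv a" using ab c x by (simp add: inv_mult_group m_assoc)
  moreover have "inv b \<in> H" "inv a \<in> H" using ab H by (auto intro: subgroup.m_inv_closed)
  ultimately show ?thesis by (auto simp: dcos_iff)
qed

lemma dcos_inv_iff:
  assumes H: "subgroup H G" and x: "x \<in> carrier G" and y: "y \<in> carrier G"
  shows "inv y \<in> dcos G H x \<longleftrightarrow> y \<in> dcos G H (inv x)"
  using dcos_inv[OF H x, of "inv y"] dcos_inv[OF H _ , of "inv x" y] x y by auto

lemma dcos_rcos: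
  assumes H: "subgroup H G" and x: "x \<in> carrier G" and y: "y \<in> dcos G H x"
  shows "H #> y \<subseteq> dcos G H x"
proof
  fix z assume "z \<in> H #> y"
  then obtain h where h: "h \<in> H" "z = h \<otimes> y" unfolding r_coset_def by auto
  obtain a b where ab: "a \<in> H" "b \<in> H" "y = a \<otimes> x \<otimes> b" using y by (auto simp: dcos_iff)
  have c: "a \<in> carrier G" "b \<in> carrier G" "h \<in> carrier G" using ab h H by (auto dest: subgroup.mem_carrier)
  have "z = (h \<otimes> a) \<otimes> x \<otimes> b" using h ab c x by (simp add: m_assoc)
  moreover have "h \<otimes> a \<in> H" using h ab H by (auto intro: subgroup.m_closed)
  ultimately show "z \<in> dcos G H x" using ab by (auto simp: dcos_iff)
qed

lemma dcos_adj:
  assumes H: "subgroup H G" and x: "x \<in> carrier G" and y: "y \<in> dcos G H x"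
    and z: "z \<in> dcos G H (inv x)"
  shows "\<exists>g\<in>H #> y. inv g \<in> H #> z"
proof -
  have yc: "y \<in> carrier G" using dcos_carrier[OF H x] y by auto
  have "dcos G H (inv y) = dcos G H (inv x)"
    using dcos_trans[OF H _ dcos_inv[OF H x y]] x by simp
  then have "z \<in> dcos G H (inv y)" using z by simp
  then obtain p q where pq: "p \<in> H" "q \<in> H" "z = p \<otimes> inv y \<otimes> q" by (auto simp: dcos_iff)
  have c: "p \<in> carrier G" "q \<in> carrier G" using pq H by (auto dest: subgroup.mem_carrier)
  define g where "g = inv q \<otimes> y"
  have g1: "g \<in> H #> y" unfolding g_def using pq H yc
    by (intro rcosI) (auto intro: subgroup.m_inv_closed dest: subgroup.subset)
  have "inv g = inv p \<otimes> z" unfolding g_def using pq c yc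
    by (simp add: inv_mult_group m_assoc)
  moreover have "inv p \<otimes> z \<in> H #> z" using pq H c yc
    by (intro rcosI) (auto intro: subgroup.m_inv_closed dest: subgroup.subset)
  ultimately have "inv g \<in> H #> z" by simp
  with g1 show ?thesis by blast
qed

end


definition good :: "('g,'b) monoid_scheme \<Rightarrow> 'g set set \<Rightarrow> 'g set \<Rightarrow> bool" where
  "good G X T \<longleftrightarrow> T \<subseteq> \<Union>X \<and> (\<forall>t\<in>T. inv\<^bsub>G\<^esub> t \<in> T) \<and> (\<forall>c\<in>X. \<exists>!t. t \<in> T \<and> t \<in> c)"

context group begin

lemma rcos_same:
  assumes H: "subgroup H G" and c: "c \<in> rcosets H" and c': "c' \<in> rcosets H"
    and t: "t \<in> c" "t \<in> c'"
  shows "c = c'"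
  using rcos_disjoint[OF H] c c' t unfolding pairwise_def disjnt_def by blast

lemma rcosets_finite_set:
  assumes H: "subgroup H G" and fin: "finite (carrier G)"
  shows "finite (rcosets H)"
  using rcosets_subset_PowG[OF H] fin by (meson finite_Pow_iff finite_subset)

lemma rcos_in_carrier:
  assumes H: "subgroup H G" "c \<in> rcosets H" "t \<in> c" shows "t \<in> carrier G"
  using rcosets_subset_PowG[OF H(1)] H by auto

lemma matching_AB:
  assumes H: "subgroup H G" and fin: "finite (carrier G)"
    and A: "A \<subseteq> rcosets H" and B: "B \<subseteq> rcosets H" and AB: "A \<inter> B = {}"
    and card: "card A = card B"
    and adj: "\<forall>c\<in>A. \<forall>c'\<in>B. \<exists>g\<in>c. inv g \<in> c'"
  shows "\<exists>T. good G (A \<union> B) T"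
proof -
  have finA: "finite A" and finB: "finite B"
    using rcosets_finite_set[OF H fin] A B by (auto intro: finite_subset)
  obtain f where f: "bij_betw f A B" using finite_same_card_bij[OF finA finB card] by blast
  define r where "r c = (SOME g. g \<in> c \<and> inv g \<in> f c)" for c
  have r: "r c \<in> c \<and> inv (r c) \<in> f c" if "c \<in> A" for c
  proof -
    have "f c \<in> B" using f that by (auto simp: bij_betw_def)
    then have "\<exists>g. g \<in> c \<and> inv g \<in> f c" using adj that by blast
    then show ?thesis unfolding r_def by (rule someI_ex)
  qed
  have rc: "r c \<in> carrier G" if "c \<in> A" for c
    using r[OF that] rcos_in_carrier[OF H] A that by auto
  define T where "T = r ` A \<union> (\<lambda>c. inv (r c)) ` A"
  have canon: "t = (if c \<in> A then r c else inv (r (inv_into A f c)))"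
    if tT: "t \<in> T" and c: "c \<in> A \<union> B" and tc: "t \<in> c" for t c
  proof -
    have cr: "c \<in> rcosets H" using c A B by auto
    from tT consider c' where "c' \<in> A" "t = r c'" | c' where "c' \<in> A" "t = inv (r c')"
      unfolding T_def by blast
    then show ?thesis
    proof cases
      case 1
      then have "c = c'" using rcos_same[OF H cr _ tc] r[OF 1(1)] A by auto
      then show ?thesis using 1 by simp
    next
      case 2
      have fB: "f c' \<in> B" using f 2 by (auto simp: bij_betw_def)
      then have "c = f c'" using rcos_same[OF H cr _ tc] r[OF 2(1)] B 2 by auto
      moreover have "c \<notin> A" using fB AB \<open>c = f c'\<close> by auto
      moreover have "inv_into A f c = c'" using f 2(1) \<open>c = f c'\<close>
        by (simp add: bij_betw_def inv_into_f_f)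
      ultimately show ?thesis using 2 by simp
    qed
  qed
  have "T \<subseteq> \<Union>(A \<union> B)"
    unfolding T_def using r f by (auto simp: bij_betw_def)
  moreover have "\<forall>t\<in>T. inv t \<in> T"
    unfolding T_def using rc by auto
  moreover have "\<forall>c\<in>A \<union> B. \<exists>!t. t \<in> T \<and> t \<in> c"
  proof
    fix c assume c: "c \<in> A \<union> B"
    have "\<exists>t. t \<in> T \<and> t \<in> c"
    proof (cases "c \<in> A")
      case True then show ?thesis using r[OF True] unfolding T_def by auto
    next
      case False
      then have "c \<in> B" using c by auto
      then obtain c' where "c' \<in> A" "c = f c'" using f by (auto simp: bij_betw_def)
      then show ?thesis using r[OF \<open>c' \<in> A\<close>] unfolding T_def by auto
    qed
    then obtain t0 where t0: "t0 \<in> T" "t0 \<in> c" by blast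
    show "\<exists>!t. t \<in> T \<and> t \<in> c"
    proof (rule ex1I[of _ t0])
      show "t0 \<in> T \<and> t0 \<in> c" using t0 by simp
    next
      fix t assume "t \<in> T \<and> t \<in> c"
      then show "t = t0" using canon[of t c] canon[OF t0(1) c t0(2)] c by simp
    qed
  qed
  ultimately have "good G (A \<union> B) T" unfolding good_def by (intro conjI) 
  then show ?thesis by (rule exI)
qed

lemma good_single:
  assumes H: "subgroup H G" and y: "y \<in> carrier G" "y \<otimes> y = \<one>"
  shows "good G {H #> y} {y}"
proof -
  have "inv y = y" using y by (simp add: inv_equality)
  then have a: "\<forall>t\<in>{y}. inv t \<in> {y}" by simp
  have b: "\<forall>c\<in>{H #> y}. \<exists>!t. t \<in> {y} \<and> t \<in> c" using rcos_self[OF y(1) H] by auto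
  have c: "{y} \<subseteq> \<Union>{H #> y}" using rcos_self[OF y(1) H] by simp
  show ?thesis unfolding good_def using a b c by blast
qed

lemma good_union:
  assumes H: "subgroup H G" and X: "X \<subseteq> rcosets H" and Y: "Y \<subseteq> rcosets H"
    and XY: "X \<inter> Y = {}" and g1: "good G X T1" and g2: "good G Y T2"
  shows "good G (X \<union> Y) (T1 \<union> T2)"
proof -
  have a: "t \<notin> c" if th: "t \<in> T2" "c \<in> X" for t c
  proof
    assume tc: "t \<in> c"
    have "T2 \<subseteq> \<Union>Y" using g2 unfolding good_def by simp
    then obtain c' where "c' \<in> Y" "t \<in> c'" using th by blast
    then have "c = c'" using rcos_same[OF H, of c c' t] X Y th tc by auto
    then show False using XY \<open>c' \<in> Y\<close> th by auto
  qed
  have b: "t \<notin> c" if th: "t \<in> T1" "c \<in> Y" for t c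
  proof
    assume tc: "t \<in> c"
    have "T1 \<subseteq> \<Union>X" using g1 unfolding good_def by simp
    then obtain c' where "c' \<in> X" "t \<in> c'" using th by blast
    then have "c = c'" using rcos_same[OF H, of c c' t] X Y th tc by auto
    then show False using XY \<open>c' \<in> X\<close> th by auto
  qed
  have "\<exists>!t. t \<in> T1 \<union> T2 \<and> t \<in> c" if c: "c \<in> X \<union> Y" for c
  proof (cases "c \<in> X")
    case True
    then obtain t where "t \<in> T1" "t \<in> c" "\<forall>t'. t' \<in> T1 \<and> t' \<in> c \<longrightarrow> t' = t"
      using g1 unfolding good_def by metis
    then show ?thesis using a[OF _ True] by blast
  next
    case False
    then have cY: "c \<in> Y" using c by auto
    then obtain t where "t \<in> T2" "t \<in> c" "\<forall>t'. t' \<in> T2 \<and> t' \<in> c \<longrightarrow> t' = t"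
      using g2 unfolding good_def by metis
    then show ?thesis using b[OF _ cY] by blast
  qed
  moreover have "T1 \<union> T2 \<subseteq> \<Union>(X \<union> Y)" using g1 g2 unfolding good_def by auto
  moreover have "\<forall>t\<in>T1 \<union> T2. inv t \<in> T1 \<union> T2" using g1 g2 unfolding good_def by auto
  ultimately show ?thesis unfolding good_def by blast
qed

end


definition Rc :: "('g,'b) monoid_scheme \<Rightarrow> 'g set \<Rightarrow> 'g \<Rightarrow> 'g set set" where
  "Rc G H x = (\<lambda>y. H #>\<^bsub>G\<^esub> y) ` dcos G H x"

lemma even_split:
  assumes "finite X" "even (card X)"
  shows "\<exists>A\<subseteq>X. card A = card (X - A)"
proof -
  obtain A where A: "A \<subseteq> X" "card A = card X div 2" "finite A"
    using obtain_subset_with_card_n[of "card X div 2" X] by auto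
  have "card (X - A) = card X - card A" using A assms by (simp add: card_Diff_subset)
  then show ?thesis using A assms by (intro exI[of _ A]) auto
qed

context group begin

lemma card_union_rcos:
  assumes H: "subgroup H G" and fin: "finite (carrier G)"
    and E: "E \<subseteq> carrier G" and EH: "\<forall>y\<in>E. H #> y \<subseteq> E"
  shows "card E = card ((\<lambda>y. H #> y) ` E) * card H"
proof -
  let ?C = "(\<lambda>y. H #> y) ` E"
  have U: "\<Union>?C = E" using EH rcos_self[OF _ H] E by blast
  have finE: "finite E" using E fin by (rule finite_subset)
  have cc: "\<forall>c\<in>?C. card c = card H"
    using card_rcosets_equal[OF rcosetsI subgroup.subset[OF H]] subgroup.subset[OF H] E
    by (metis image_iff subsetD)
  have Cr: "?C \<subseteq> rcosets H" using E rcosetsI[OF subgroup.subset[OF H]] by auto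
  have dj: "\<forall>c1\<in>?C. \<forall>c2\<in>?C. c1 \<noteq> c2 \<longrightarrow> c1 \<inter> c2 = {}"
    using rcos_same[OF H] Cr by blast
  have "card H * card ?C = card (\<Union>?C)"
    using card_partition[of ?C "card H"] cc dj finE U by simp
  then show ?thesis using U by (simp add: mult.commute)
qed

lemma Rc_sub:
  assumes H: "subgroup H G" and x: "x \<in> carrier G" shows "Rc G H x \<subseteq> rcosets H"
  unfolding Rc_def using dcos_carrier[OF H x] rcosetsI[OF subgroup.subset[OF H]] by auto

lemma Union_Rc:
  assumes H: "subgroup H G" and x: "x \<in> carrier G" shows "\<Union>(Rc G H x) = dcos G H x"
  unfolding Rc_def using dcos_rcos[OF H x] rcos_self[OF _ H] dcos_carrier[OF H x] by blast

lemma card_Rc: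
  assumes H: "subgroup H G" and fin: "finite (carrier G)" and x: "x \<in> carrier G"
  shows "card (dcos G H x) = card (Rc G H x) * card H"
  unfolding Rc_def
  by (rule card_union_rcos[OF H fin dcos_carrier[OF H x]]) (use dcos_rcos[OF H x] in blast)

lemma dcos_inv_image:
  assumes H: "subgroup H G" and x: "x \<in> carrier G"
  shows "dcos G H (inv x) = (\<lambda>z. inv z) ` dcos G H x"
proof
  show "dcos G H (inv x) \<subseteq> (\<lambda>z. inv z) ` dcos G H x"
  proof
    fix y assume y: "y \<in> dcos G H (inv x)"
    have yc: "y \<in> carrier G" using dcos_carrier[OF H] x y by auto
    then have "inv y \<in> dcos G H x" using dcos_inv_iff[OF H x yc] y by simp
    then show "y \<in> (\<lambda>z. inv z) ` dcos G H x" using yc by (metis image_eqI inv_inv)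
  qed
next
  show "(\<lambda>z. inv z) ` dcos G H x \<subseteq> dcos G H (inv x)" using dcos_inv[OF H x] by auto
qed

lemma card_dcos_inv:
  assumes H: "subgroup H G" and x: "x \<in> carrier G"
  shows "card (dcos G H (inv x)) = card (dcos G H x)"
proof -
  have "inj_on (\<lambda>z. inv z) (dcos G H x)" 
    using inj_on_subset[OF inv_inj dcos_carrier[OF H x]] by simp
  then show ?thesis using dcos_inv_image[OF H x] by (simp add: card_image)
qed

lemma Rc_mem:
  "c \<in> Rc G H x \<longleftrightarrow> (\<exists>y\<in>dcos G H x. c = H #> y)"
  unfolding Rc_def by auto

lemma class_good:
  assumes H: "subgroup H G" and fin: "finite (carrier G)" and x: "x \<in> carrier G"
    and hyp: "inv x \<in> dcos G H x \<Longrightarrow> odd (card (Rc G H x)) \<Longrightarrow> \<exists>y\<in>dcos G H x. y \<otimes> y = \<one>"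
  shows "\<exists>T. good G (Rc G H x \<union> Rc G H (inv x)) T"
proof (cases "inv x \<in> dcos G H x")
  case False
  have ix: "inv x \<in> carrier G" using x by simp
  have dj: "Rc G H x \<inter> Rc G H (inv x) = {}"
  proof (rule ccontr)
    assume "Rc G H x \<inter> Rc G H (inv x) \<noteq> {}"
    then obtain y1 y2 where y: "y1 \<in> dcos G H x" "y2 \<in> dcos G H (inv x)" "H #> y1 = H #> y2"
      unfolding Rc_def by blast
    have y2c: "y2 \<in> carrier G" using dcos_carrier[OF H ix] y by auto
    have "y2 \<in> H #> y1" using y(3) rcos_self[OF y2c H] by simp
    then have "y2 \<in> dcos G H x" using dcos_rcos[OF H x y(1)] by auto
    then have "dcos G H (inv x) = dcos G H x"
      using dcos_trans[OF H x] dcos_trans[OF H ix y(2)] by simp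
    then show False using False dcos_self[OF H ix] by simp
  qed
  have "card (Rc G H x) = card (Rc G H (inv x))"
  proof -
    have "card (Rc G H x) * card H = card (Rc G H (inv x)) * card H"
      using card_Rc[OF H fin x] card_Rc[OF H fin ix] card_dcos_inv[OF H x] by simp
    moreover have "card H > 0" using subgroup.finite_imp_card_positive[OF H]
        fin subgroup.subset[OF H] by (meson finite_subset)
    ultimately show ?thesis by simp
  qed
  moreover have "\<forall>c\<in>Rc G H x. \<forall>c'\<in>Rc G H (inv x). \<exists>g\<in>c. inv g \<in> c'"
  proof (intro ballI)
    fix c c' assume "c \<in> Rc G H x" "c' \<in> Rc G H (inv x)"
    then obtain y z where "y \<in> dcos G H x" "z \<in> dcos G H (inv x)" "c = H #> y" "c' = H #> z"
      unfolding Rc_mem by blast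
    then show "\<exists>g\<in>c. inv g \<in> c'" using dcos_adj[OF H x] by blast
  qed
  ultimately show ?thesis
    using matching_AB[OF H fin Rc_sub[OF H x] Rc_sub[OF H ix] dj] by blast
next
  case True
  have ix: "inv x \<in> carrier G" using x by simp
  have eqd: "dcos G H (inv x) = dcos G H x" using dcos_trans[OF H x True] .
  then have eqR: "Rc G H (inv x) = Rc G H x" unfolding Rc_def by simp
  have adj: "\<forall>c\<in>Rc G H x. \<forall>c'\<in>Rc G H x. \<exists>g\<in>c. inv g \<in> c'"
  proof (intro ballI)
    fix c c' assume "c \<in> Rc G H x" "c' \<in> Rc G H x"
    then obtain y z where "y \<in> dcos G H x" "z \<in> dcos G H (inv x)" "c = H #> y" "c' = H #> z"
      unfolding Rc_mem eqd by blast
    then show "\<exists>g\<in>c. inv g \<in> c'" using dcos_adj[OF H x] by blast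
  qed
  have finX: "finite (Rc G H x)" using rcosets_finite_set[OF H fin] Rc_sub[OF H x]
    by (rule finite_subset[rotated])
  have Xsub: "Rc G H x \<subseteq> rcosets H" by (rule Rc_sub[OF H x])
  have pair: "\<exists>T. good G X T" if X: "X \<subseteq> Rc G H x" "even (card X)" for X
  proof -
    have "finite X" using X finX by (auto intro: finite_subset)
    then obtain A where A: "A \<subseteq> X" "card A = card (X - A)" using even_split X by blast
    have "X = A \<union> (X - A)" using A by auto
    moreover have "\<exists>T. good G (A \<union> (X - A)) T"
    proof (rule matching_AB[OF H fin _ _ _ A(2)])
      show "A \<subseteq> rcosets H" "X - A \<subseteq> rcosets H" using A X Xsub by auto
      show "A \<inter> (X - A) = {}" by auto
      show "\<forall>c\<in>A. \<forall>c'\<in>X - A. \<exists>g\<in>c. inv g \<in> c'" using adj A X by blast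
    qed
    ultimately show ?thesis by simp
  qed
  show ?thesis
  proof (cases "even (card (Rc G H x))")
    case True
    then show ?thesis using pair[of "Rc G H x"] eqR by simp
  next
    case False
    then obtain y where y: "y \<in> dcos G H x" "y \<otimes> y = \<one>" using hyp \<open>inv x \<in> dcos G H x\<close> by blast
    have yc: "y \<in> carrier G" using dcos_carrier[OF H x] y by auto
    have cy: "H #> y \<in> Rc G H x" unfolding Rc_mem using y by blast
    let ?X = "Rc G H x - {H #> y}"
    have "card ?X = card (Rc G H x) - 1" using cy finX by simp
    moreover have "card (Rc G H x) > 0" using cy finX card_gt_0_iff by blast
    ultimately have "even (card ?X)" using False by presburger
    then obtain T where T: "good G ?X T" using pair[of ?X] by blast
    have "good G (?X \<union> {H #> y}) (T \<union> {y})"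
      by (rule good_union[OF H _ _ _ T good_single[OF H yc y(2)]])
         (use Xsub cy in auto)
    moreover have "?X \<union> {H #> y} = Rc G H x \<union> Rc G H (inv x)" using cy eqR by auto
    ultimately show ?thesis by auto
  qed
qed

end


context group begin

lemma transversal_exists:
  assumes H: "subgroup H G" and fin: "finite (carrier G)"
    and hyp: "\<forall>x\<in>carrier G. inv x \<in> dcos G H x \<and> odd (card (Rc G H x)) \<longrightarrow> (\<exists>y\<in>dcos G H x. y \<otimes> y = \<one>)"
  shows "\<exists>T. T \<subseteq> carrier G \<and> (\<forall>t\<in>T. inv t \<in> T) \<and> (\<forall>y\<in>carrier G. \<exists>!t. t \<in> T \<and> t \<in> H #> y)"
proof -
  define Cls where "Cls x = Rc G H x \<union> Rc G H (inv x)" for x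
  define TT where "TT x = (SOME T. good G (Cls x) T)" for x
  have gTT: "good G (Cls x) (TT x)" if x: "x \<in> carrier G" for x
  proof -
    have "\<exists>T. good G (Cls x) T" unfolding Cls_def
      by (rule class_good[OF H fin x]) (use hyp x in blast)
    then show ?thesis unfolding TT_def by (rule someI_ex)
  qed
  have UC: "\<Union>(Cls x) = dcos G H x \<union> dcos G H (inv x)" if x: "x \<in> carrier G" for x
    unfolding Cls_def using Union_Rc[OF H x] Union_Rc[OF H inv_closed[OF x]] by auto
  have ClsEq: "Cls y = Cls x" if x: "x \<in> carrier G" and y: "y \<in> dcos G H x \<union> dcos G H (inv x)" for x y
  proof -
    have ix: "inv x \<in> carrier G" using x by simp
    have yc: "y \<in> carrier G" using y dcos_carrier[OF H x] dcos_carrier[OF H ix] by auto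
    have "dcos G H y = dcos G H x \<and> dcos G H (inv y) = dcos G H (inv x) \<or>
          dcos G H y = dcos G H (inv x) \<and> dcos G H (inv y) = dcos G H x"
    proof (cases "y \<in> dcos G H x")
      case True
      then show ?thesis using dcos_trans[OF H x True] dcos_trans[OF H ix dcos_inv[OF H x True]] by simp
    next
      case False
      then have y2: "y \<in> dcos G H (inv x)" using y by simp
      have "inv y \<in> dcos G H x" using dcos_inv[OF H ix y2] x by simp
      then show ?thesis using dcos_trans[OF H ix y2] dcos_trans[OF H x] by simp
    qed
    then show ?thesis unfolding Cls_def Rc_def by auto
  qed
  define T where "T = (\<Union>x\<in>carrier G. TT x)"
  have TTsub: "TT x \<subseteq> dcos G H x \<union> dcos G H (inv x)" if x: "x \<in> carrier G" for x
    using gTT[OF x] UC[OF x] unfolding good_def by simp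
  have "T \<subseteq> carrier G"
    unfolding T_def using TTsub dcos_carrier[OF H] by blast
  moreover have "\<forall>t\<in>T. inv t \<in> T"
    unfolding T_def using gTT unfolding good_def by blast
  moreover have "\<forall>y\<in>carrier G. \<exists>!t. t \<in> T \<and> t \<in> H #> y"
  proof
    fix y assume y: "y \<in> carrier G"
    have cy: "H #> y \<in> Cls y" unfolding Cls_def Rc_def using dcos_self[OF H y] by blast
    have u: "\<forall>c\<in>Cls y. \<exists>!t. t \<in> TT y \<and> t \<in> c" using gTT[OF y] unfolding good_def by simp
    then obtain t0 where t0: "t0 \<in> TT y" "t0 \<in> H #> y" using cy by blast
    have inTy: "t \<in> TT y" if t: "t \<in> T" "t \<in> H #> y" for t
    proof -
      obtain x where x: "x \<in> carrier G" "t \<in> TT x" using t unfolding T_def by blast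
      have tE: "t \<in> dcos G H x \<union> dcos G H (inv x)" using TTsub[OF x(1)] x(2) by blast
      have tc: "t \<in> carrier G" using tE dcos_carrier[OF H x(1)] dcos_carrier[OF H inv_closed[OF x(1)]] by auto
      have "H #> y = H #> t" using repr_independence[OF t(2) y H] .
      then have "y \<in> H #> t" using rcos_self[OF y H] by simp
      then have "y \<in> dcos G H x \<union> dcos G H (inv x)"
        using tE dcos_rcos[OF H x(1)] dcos_rcos[OF H inv_closed[OF x(1)]] by blast
      then have "Cls y = Cls x" using ClsEq[OF x(1)] by blast
      then have "TT y = TT x" unfolding TT_def by simp
      then show ?thesis using x by simp
    qed
    show "\<exists>!t. t \<in> T \<and> t \<in> H #> y"
    proof (rule ex1I[of _ t0])
      show "t0 \<in> T \<and> t0 \<in> H #> y" using t0 y unfolding T_def by blast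
    next
      fix t assume "t \<in> T \<and> t \<in> H #> y"
      then have "t \<in> TT y" "t \<in> H #> y" using inTy by auto
      then show "t = t0" using u cy t0 by blast
    qed
  qed
  ultimately show ?thesis by blast
qed

end


context group begin

lemma pc_from_T:
  assumes H: "subgroup H G" and T: "T \<subseteq> carrier G" "\<forall>t\<in>T. inv t \<in> T"
    "\<forall>y\<in>carrier G. \<exists>!t. t \<in> T \<and> t \<in> H #> y"
  shows "subgroup_perfect_code G H"
proof -
  define S where "S = T - H"
  have Hc: "H \<subseteq> carrier G" using subgroup.subset[OF H] .
  have one: "\<one> \<in> H" using subgroup.one_closed[OF H] .
  have S1: "S \<subseteq> carrier G - {\<one>}" unfolding S_def using T one by auto
  have S2: "\<forall>s\<in>S. inv s \<in> S"
  proof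
    fix s assume s: "s \<in> S"
    then have "inv s \<in> T" "s \<in> carrier G" using T unfolding S_def by auto
    moreover have "inv s \<notin> H"
    proof
      assume "inv s \<in> H"
      then have "inv (inv s) \<in> H" using subgroup.m_inv_closed[OF H] by blast
      then show False using s \<open>s \<in> carrier G\<close> unfolding S_def by simp
    qed
    ultimately show "inv s \<in> S" unfolding S_def by simp
  qed
  have indep: "\<forall>x\<in>H. \<forall>y\<in>H. \<not> cayley_adj G S x y"
  proof (intro ballI notI)
    fix x y assume xy: "x \<in> H" "y \<in> H" and a: "cayley_adj G S x y"
    then obtain s where s: "s \<in> S" "y = s \<otimes> x \<or> x = s \<otimes> y" unfolding cayley_adj_def by blast
    have sc: "s \<in> carrier G" using s S1 by auto
    have xc: "x \<in> carrier G" "y \<in> carrier G" using xy Hc by auto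
    have "s = y \<otimes> inv x \<or> s = x \<otimes> inv y" using s(2) sc xc by (auto simp: m_assoc)
    then have "s \<in> H" using xy subgroup.m_closed[OF H] subgroup.m_inv_closed[OF H] by auto
    then show False using s unfolding S_def by auto
  qed
  have key: "c \<otimes> inv x \<in> T" if x: "x \<in> carrier G" and c: "c \<in> H" and a: "cayley_adj G S x c" for x c
  proof -
    obtain s where s: "s \<in> S" "c = s \<otimes> x \<or> x = s \<otimes> c" using a unfolding cayley_adj_def by blast
    have sc: "s \<in> carrier G" using s S1 by auto
    have cc: "c \<in> carrier G" using c Hc by auto
    have "c \<otimes> inv x = s \<or> c \<otimes> inv x = inv s" using s(2) sc cc x
      by (auto simp: m_assoc inv_mult_group)
    then show ?thesis using s(1) S2 unfolding S_def by auto
  qed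
  have perf: "\<forall>x\<in>carrier G - H. \<exists>!c. c \<in> H \<and> cayley_adj G S x c"
  proof
    fix x assume x: "x \<in> carrier G - H"
    have xc: "x \<in> carrier G" and ix: "inv x \<in> carrier G" using x by auto
    obtain s where s: "s \<in> T" "s \<in> H #> inv x" using T(3) ix by blast
    obtain h where h: "h \<in> H" "s = h \<otimes> inv x" using s(2) unfolding r_coset_def by blast
    have hc: "h \<in> carrier G" using h Hc by auto
    have sH: "s \<notin> H"
    proof
      assume "s \<in> H"
      then have "h \<otimes> inv x \<otimes> inv h \<in> H" using h subgroup.m_closed[OF H] subgroup.m_inv_closed[OF H] by auto
      moreover have "h \<otimes> inv x \<otimes> inv h \<in> H \<Longrightarrow> inv x \<in> H"
      proof -
        assume a: "h \<otimes> inv x \<otimes> inv h \<in> H"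
        have "inv h \<otimes> (h \<otimes> inv x \<otimes> inv h) \<otimes> h = inv x" using hc ix by (simp add: m_assoc)
        moreover have "inv h \<otimes> (h \<otimes> inv x \<otimes> inv h) \<otimes> h \<in> H"
          using a h subgroup.m_closed[OF H] subgroup.m_inv_closed[OF H] by auto
        ultimately show ?thesis by simp
      qed
      ultimately have "inv x \<in> H" by simp
      then have "inv (inv x) \<in> H" using subgroup.m_inv_closed[OF H] by blast
      then show False using x by simp
    qed
    have invS: "inv s \<in> S" using s sH S2 T(2) unfolding S_def
      by (metis DiffI S_def S2)
    have adj: "cayley_adj G S x h"
    proof -
      have "x = inv s \<otimes> h" using h hc xc by (simp add: inv_mult_group m_assoc)
      then show ?thesis unfolding cayley_adj_def using xc hc invS by blast
    qed
    show "\<exists>!c. c \<in> H \<and> cayley_adj G S x c"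
    proof (rule ex1I[of _ h])
      show "h \<in> H \<and> cayley_adj G S x h" using h adj by simp
    next
      fix c assume c: "c \<in> H \<and> cayley_adj G S x c"
      have cc: "c \<in> carrier G" using c Hc by auto
      have "c \<otimes> inv x \<in> T" using key[OF xc] c by blast
      moreover have "c \<otimes> inv x \<in> H #> inv x" using c Hc ix by (intro rcosI) auto
      moreover have "h \<otimes> inv x \<in> T" using key[OF xc h(1) adj] .
      moreover have "h \<otimes> inv x \<in> H #> inv x" using h Hc ix by (intro rcosI) auto
      ultimately have "c \<otimes> inv x = h \<otimes> inv x" using T(3) ix by blast
      then show "c = h" using cc hc ix by simp
    qed
  qed
  have "cayley_perfect_code G S H" unfolding cayley_perfect_code_def using Hc indep perf by blast
  then show ?thesis unfolding subgroup_perfect_code_def using H S1 S2 by blast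
qed

lemma T_from_pc:
  assumes pc: "subgroup_perfect_code G H"
  shows "\<exists>T. T \<subseteq> carrier G \<and> (\<forall>t\<in>T. inv t \<in> T) \<and> (\<forall>y\<in>carrier G. \<exists>!t. t \<in> T \<and> t \<in> H #> y)"
proof -
  have H: "subgroup H G" using pc unfolding subgroup_perfect_code_def by simp
  obtain S where S: "S \<subseteq> carrier G - {\<one>}" "\<forall>s\<in>S. inv s \<in> S" "cayley_perfect_code G S H"
    using pc unfolding subgroup_perfect_code_def by blast
  have Hc: "H \<subseteq> carrier G" using subgroup.subset[OF H] .
  have one: "\<one> \<in> H" using subgroup.one_closed[OF H] .
  have indep: "\<forall>x\<in>H. \<forall>y\<in>H. \<not> cayley_adj G S x y" and
    perf: "\<forall>x\<in>carrier G - H. \<exists>!c. c \<in> H \<and> cayley_adj G S x c"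
    using S(3) unfolding cayley_perfect_code_def by auto
  have SH: "S \<inter> H = {}"
  proof (rule ccontr)
    assume "S \<inter> H \<noteq> {}"
    then obtain s where s: "s \<in> S" "s \<in> H" by blast
    have sc: "s \<in> carrier G" using s S by auto
    have "cayley_adj G S \<one> s" unfolding cayley_adj_def using s sc by (metis one_closed r_one)
    then show False using indep one s by blast
  qed
  define T where "T = insert \<one> S"
  have "T \<subseteq> carrier G" unfolding T_def using S by auto
  moreover have "\<forall>t\<in>T. inv t \<in> T" unfolding T_def using S by auto
  moreover have "\<forall>y\<in>carrier G. \<exists>!t. t \<in> T \<and> t \<in> H #> y"
  proof
    fix y assume y: "y \<in> carrier G"
    show "\<exists>!t. t \<in> T \<and> t \<in> H #> y"
    proof (cases "y \<in> H")
      case True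
      then have "H #> y = H" using subgroup.rcos_const[OF H is_group] by blast
      then show ?thesis unfolding T_def using SH one by auto
    next
      case False
      have x: "inv y \<in> carrier G - H"
      proof -
        have "inv y \<notin> H" using False subgroup.m_inv_closed[OF H] y by force
        then show ?thesis using y by simp
      qed
      then obtain c where c: "c \<in> H" "cayley_adj G S (inv y) c"
        and cu: "\<And>c'. c' \<in> H \<and> cayley_adj G S (inv y) c' \<Longrightarrow> c' = c" using perf by metis
      have cc: "c \<in> carrier G" using c Hc by auto
      obtain s where s: "s \<in> S" "c = s \<otimes> inv y \<or> inv y = s \<otimes> c"
        using c(2) unfolding cayley_adj_def by blast
      have sc: "s \<in> carrier G" using s S by auto
      have "c \<otimes> y = s \<or> c \<otimes> y = inv s"
      proof (cases "c = s \<otimes> inv y")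
        case True then show ?thesis using sc y by (simp add: m_assoc)
      next
        case False
        then have e: "inv y = s \<otimes> c" using s(2) by auto
        have "y = inv (inv y)" using y by simp
        also have "\<dots> = inv c \<otimes> inv s" using e sc cc by (simp add: inv_mult_group)
        finally show ?thesis using sc cc by simp
      qed
      then have cyS: "c \<otimes> y \<in> S" using s S(2) by auto
      show ?thesis
      proof (rule ex1I[of _ "c \<otimes> y"])
        show "c \<otimes> y \<in> T \<and> c \<otimes> y \<in> H #> y"
          using cyS c Hc y unfolding T_def by (auto intro: rcosI)
      next
        fix t assume t: "t \<in> T \<and> t \<in> H #> y"
        obtain h where h: "h \<in> H" "t = h \<otimes> y" using t unfolding r_coset_def by blast
        have hc: "h \<in> carrier G" using h Hc by auto
        have "t \<noteq> \<one>"
        proof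
          assume "t = \<one>"
          then have "h \<otimes> y = \<one>" using h by simp
          then have "y = inv h" using inv_equality[of h y] hc y by (metis inv_inv)
          then show False using False h subgroup.m_inv_closed[OF H] by auto
        qed
        then have tS: "t \<in> S" using t unfolding T_def by auto
        have "h = t \<otimes> inv y" using h hc y by (simp add: m_assoc)
        then have "cayley_adj G S (inv y) h" unfolding cayley_adj_def using tS hc y by blast
        then have "h = c" using cu h by blast
        then show "t = c \<otimes> y" using h by simp
      qed
    qed
  qed
  ultimately show ?thesis by blast
qed

lemma card_transversal:
  assumes H: "subgroup H G" and T: "T \<subseteq> carrier G" "\<forall>y\<in>carrier G. \<exists>!t. t \<in> T \<and> t \<in> H #> y"
  shows "card T = card (rcosets H)"
proof -
  have "bij_betw (\<lambda>t. H #> t) T (rcosets H)"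
  proof (rule bij_betwI')
    fix t1 t2 assume t: "t1 \<in> T" "t2 \<in> T"
    have tc: "t1 \<in> carrier G" "t2 \<in> carrier G" using t T by auto
    show "(H #> t1 = H #> t2) = (t1 = t2)"
    proof
      assume e: "H #> t1 = H #> t2"
      have "t1 \<in> H #> t1" "t2 \<in> H #> t1" using rcos_self[OF _ H] tc e by auto
      then show "t1 = t2" using T(2) tc t by blast
    qed simp
  next
    fix t assume "t \<in> T" then show "H #> t \<in> rcosets H"
      using T rcosetsI[OF subgroup.subset[OF H]] by auto
  next
    fix c assume "c \<in> rcosets H"
    then obtain y where y: "y \<in> carrier G" "c = H #> y" unfolding RCOSETS_def by auto
    then obtain t where t: "t \<in> T" "t \<in> H #> y" using T(2) by blast
    have "H #> y = H #> t" using repr_independence[OF t(2) y(1) H] .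
    then show "\<exists>t\<in>T. c = H #> t" using t y by auto
  qed
  then show ?thesis by (rule bij_betw_same_card)
qed

end


lemma card_image_same_kernel:
  assumes "\<forall>a\<in>A. \<forall>b\<in>A. f a = f b \<longleftrightarrow> g a = g b"
  shows "card (f ` A) = card (g ` A)"
proof -
  define \<phi> where "\<phi> u = g (inv_into A f u)" for u
  have "bij_betw \<phi> (f ` A) (g ` A)"
  proof (rule bij_betwI')
    fix u v assume "u \<in> f ` A" "v \<in> f ` A"
    then obtain a b where ab: "a \<in> A" "b \<in> A" "u = f a" "v = f b" by blast
    have ia: "inv_into A f u \<in> A" "f (inv_into A f u) = u" using ab by (auto intro: inv_into_into f_inv_into_f)
    have ib: "inv_into A f v \<in> A" "f (inv_into A f v) = v" using ab by (auto intro: inv_into_into f_inv_into_f)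
    show "(\<phi> u = \<phi> v) = (u = v)" unfolding \<phi>_def using assms ia ib by metis
  next
    fix u assume "u \<in> f ` A"
    then obtain a where a: "a \<in> A" "u = f a" by blast
    have "inv_into A f u \<in> A" using a by (auto intro: inv_into_into)
    then show "\<phi> u \<in> g ` A" unfolding \<phi>_def by blast
  next
    fix w assume "w \<in> g ` A"
    then obtain a where a: "a \<in> A" "w = g a" by blast
    have ia: "inv_into A f (f a) \<in> A" "f (inv_into A f (f a)) = f a" using a by (auto intro: inv_into_into f_inv_into_f)
    then have "g (inv_into A f (f a)) = g a" using assms a by metis
    then show "\<exists>u\<in>f ` A. w = \<phi> u" unfolding \<phi>_def using a by (intro bexI[of _ "f a"]) auto
  qed
  then show ?thesis by (rule bij_betw_same_card)
qed

context group begin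

lemma sub_pow_closed:
  assumes H: "subgroup H G" and h: "h \<in> H" shows "h [^] (n::nat) \<in> H"
proof (induct n)
  case 0 then show ?case using subgroup.one_closed[OF H] by simp
next
  case (Suc n) then show ?case using h subgroup.m_closed[OF H] subgroup.mem_carrier[OF H] by (simp add: nat_pow_Suc)
qed

lemma sub_pow_card:
  assumes H: "subgroup H G" and h: "h \<in> H" shows "h [^] card H = \<one>"
proof -
  interpret K: group "G\<lparr>carrier := H\<rparr>" using subgroup.subgroup_is_group[OF H is_group] .
  have "h [^]\<^bsub>G\<lparr>carrier := H\<rparr>\<^esub> order (G\<lparr>carrier := H\<rparr>) = \<one>\<^bsub>G\<lparr>carrier := H\<rparr>\<^esub>"
    using K.pow_order_eq_1 h by simp
  then show ?thesis by (simp add: order_def nat_pow_consistent[symmetric])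
qed

lemma rcos_eq_iff:
  assumes K: "subgroup K G" and a: "a \<in> carrier G" and b: "b \<in> carrier G"
  shows "K #> a = K #> b \<longleftrightarrow> a \<otimes> inv b \<in> K"
proof
  assume "K #> a = K #> b"
  then have "a \<in> K #> b" using rcos_self[OF a K] by simp
  then show "a \<otimes> inv b \<in> K" using subgroup.rcos_module[OF K is_group b a] by simp
next
  assume "a \<otimes> inv b \<in> K"
  then have "a \<in> K #> b" using subgroup.rcos_module[OF K is_group b a] by simp
  then show "K #> a = K #> b" using repr_independence[OF _ b K] by simp
qed

lemma loop_exists:
  assumes H: "subgroup H G" and x: "x \<in> carrier G" and ix: "inv x \<in> dcos G H x"
  shows "\<exists>g\<in>H #> x. g \<otimes> g \<in> H"
proof -
  have "x \<in> dcos G H (inv x)" using dcos_inv[OF H x ix] x by simp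
  then obtain g where g: "g \<in> H #> x" "inv g \<in> H #> x" using dcos_adj[OF H x dcos_self[OF H x]] by blast
  have gc: "g \<in> carrier G" using g(1) r_coset_subset_G[OF subgroup.subset[OF H] x] by auto
  have "H #> x = H #> g" using repr_independence[OF g(1) x H] .
  then have "inv g \<in> H #> g" using g by simp
  then have "inv g \<otimes> inv g \<in> H" using subgroup.rcos_module[OF H is_group gc] gc by simp
  then have "inv (inv g \<otimes> inv g) \<in> H" using subgroup.m_inv_closed[OF H] by blast
  then have "g \<otimes> g \<in> H" using gc by (simp add: inv_mult_group)
  then show ?thesis using g by blast
qed

lemma odd_power_trick:
  assumes H: "subgroup H G" and g: "g \<in> carrier G" and gg: "g \<otimes> g \<in> H"
    and m: "odd (m::nat)" and p: "(g \<otimes> g) [^] m = \<one>"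
  shows "\<exists>y\<in>H #> g. y \<otimes> y = \<one>"
proof -
  obtain k where k: "m = 2 * k + 1" using m oddE by blast
  have g2: "g \<otimes> g = g [^] (2::nat)" using g by (simp add: numeral_2_eq_2 nat_pow_Suc)
  have "g [^] m = (g \<otimes> g) [^] k \<otimes> g" using g g2 k by (simp add: nat_pow_pow nat_pow_Suc)
  moreover have "(g \<otimes> g) [^] k \<in> H" using sub_pow_closed[OF H gg] .
  ultimately have y1: "g [^] m \<in> H #> g" using rcosI[OF _ subgroup.subset[OF H] g] by simp
  have "g [^] m \<otimes> g [^] m = g [^] (m + m)" using g by (simp add: nat_pow_mult)
  also have "\<dots> = (g \<otimes> g) [^] m" using g g2 by (simp add: nat_pow_pow mult_2[symmetric])
  finally show ?thesis using y1 p by auto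
qed

lemma hyp_from_power:
  assumes H: "subgroup H G" and x: "x \<in> carrier G" and ix: "inv x \<in> dcos G H x"
    and pw: "\<And>g. g \<in> carrier G \<Longrightarrow> g \<otimes> g \<in> H \<Longrightarrow> \<exists>m::nat. odd m \<and> (g \<otimes> g) [^] m = \<one>"
  shows "\<exists>y\<in>dcos G H x. y \<otimes> y = \<one>"
proof -
  obtain g where g: "g \<in> H #> x" "g \<otimes> g \<in> H" using loop_exists[OF H x ix] by blast
  have gc: "g \<in> carrier G" using g(1) r_coset_subset_G[OF subgroup.subset[OF H] x] by auto
  obtain m :: nat where "odd m" "(g \<otimes> g) [^] m = \<one>" using pw[OF gc g(2)] by blast
  then obtain y where y: "y \<in> H #> g" "y \<otimes> y = \<one>" using odd_power_trick[OF H gc g(2)] by blast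
  have "H #> x = H #> g" using repr_independence[OF g(1) x H] .
  then have "y \<in> dcos G H x" using y(1) dcos_rcos[OF H x dcos_self[OF H x]] by auto
  then show ?thesis using y by blast
qed

end


context group begin

lemma hyp_odd_index:
  assumes H: "subgroup H G" and fin: "finite (carrier G)" and oi: "odd (card (rcosets H))"
    and x: "x \<in> carrier G" and ix: "inv x \<in> dcos G H x" and oR: "odd (card (Rc G H x))"
  shows "\<exists>y\<in>dcos G H x. y \<otimes> y = \<one>"
proof (cases "x \<in> H")
  case True
  have "\<one> = inv x \<otimes> x \<otimes> \<one>" using x by simp
  moreover have "inv x \<in> H" "\<one> \<in> H" using True subgroup.m_inv_closed[OF H] subgroup.one_closed[OF H] by auto
  ultimately have "\<one> \<in> dcos G H x" unfolding dcos_iff by blast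
  then show ?thesis by (intro bexI[of _ \<one>]) auto
next
  case False
  have Hc: "H \<subseteq> carrier G" using subgroup.subset[OF H] .
  obtain g where g: "g \<in> H #> x" "g \<otimes> g \<in> H" using loop_exists[OF H x ix] by blast
  have gc: "g \<in> carrier G" using g(1) r_coset_subset_G[OF Hc x] by auto
  have Hxg: "H #> x = H #> g" using repr_independence[OF g(1) x H] .
  have gH: "g \<notin> H"
  proof
    assume "g \<in> H"
    then have "H #> g = H" using subgroup.rcos_const[OF H is_group] by blast
    then show False using rcos_self[OF x H] Hxg False by simp
  qed
  have gd: "g \<in> dcos G H x" using g(1) dcos_rcos[OF H x dcos_self[OF H x]] by auto
  have RcEq: "Rc G H g = Rc G H x" unfolding Rc_def using dcos_trans[OF H x gd] by simp
  define z where "z = g \<otimes> g"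
  have zH: "z \<in> H" and zc: "z \<in> carrier G" using g(2) gc unfolding z_def by auto
  define K where "K = {k \<in> H. g \<otimes> k \<otimes> inv g \<in> H}"
  have KH: "K \<subseteq> H" unfolding K_def by auto
  have Kc: "K \<subseteq> carrier G" using KH Hc by auto
  have c2: "inv g \<otimes> k \<otimes> g \<in> K" if k: "k \<in> K" for k
  proof -
    have kH: "k \<in> H" "g \<otimes> k \<otimes> inv g \<in> H" using k unfolding K_def by auto
    have kc: "k \<in> carrier G" using kH Hc by auto
    have "inv g \<otimes> k \<otimes> g = inv z \<otimes> (g \<otimes> k \<otimes> inv g) \<otimes> z"
      unfolding z_def using gc kc by (simp add: m_assoc inv_mult_group)
    moreover have "inv z \<otimes> (g \<otimes> k \<otimes> inv g) \<otimes> z \<in> H"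
      using zH kH subgroup.m_closed[OF H] subgroup.m_inv_closed[OF H] by auto
    moreover have "g \<otimes> (inv g \<otimes> k \<otimes> g) \<otimes> inv g = k" using gc kc by (simp add: m_assoc)
    ultimately show ?thesis unfolding K_def using kH by simp
  qed
  have zK: "z \<in> K"
  proof -
    have "g \<otimes> z \<otimes> inv g = z" unfolding z_def using gc by (simp add: m_assoc)
    then show ?thesis unfolding K_def using zH by simp
  qed
  have Ksub: "subgroup K G"
  proof (rule subgroupI)
    show "K \<subseteq> carrier G" by (rule Kc)
    show "K \<noteq> {}" using zK by auto
  next
    fix a assume a: "a \<in> K"
    then have aH: "a \<in> H" "g \<otimes> a \<otimes> inv g \<in> H" unfolding K_def by auto
    have ac: "a \<in> carrier G" using aH Hc by auto
    have "g \<otimes> inv a \<otimes> inv g = inv (g \<otimes> a \<otimes> inv g)" using gc ac by (simp add: inv_mult_group m_assoc)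
    then show "inv a \<in> K" unfolding K_def using aH subgroup.m_inv_closed[OF H] by simp
  next
    fix a b assume a: "a \<in> K" and b: "b \<in> K"
    then have aH: "a \<in> H" "g \<otimes> a \<otimes> inv g \<in> H" and bH: "b \<in> H" "g \<otimes> b \<otimes> inv g \<in> H" unfolding K_def by auto
    have ac: "a \<in> carrier G" "b \<in> carrier G" using aH bH Hc by auto
    have "g \<otimes> (a \<otimes> b) \<otimes> inv g = (g \<otimes> a \<otimes> inv g) \<otimes> (g \<otimes> b \<otimes> inv g)" using gc ac by (simp add: m_assoc)
    then show "a \<otimes> b \<in> K" unfolding K_def using aH bH subgroup.m_closed[OF H] by simp
  qed
  have finK: "finite K" using Kc fin by (rule finite_subset)
  have Kpos: "card K > 0" using zK finK card_gt_0_iff by blast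
  have c1: "card H = card ((\<lambda>b. K #> b) ` H) * card K"
    by (rule card_union_rcos[OF Ksub fin Hc])
       (use KH subgroup.rcos_module[OF Ksub is_group] subgroup.mem_carrier[OF H] Hc in
         \<open>auto simp: r_coset_def intro: subgroup.m_closed[OF H]\<close>)
  have c2': "card ((\<lambda>b. K #> b) ` H) = card ((\<lambda>b. H #> (g \<otimes> b)) ` H)"
  proof (rule card_image_same_kernel, intro ballI)
    fix a b assume ab: "a \<in> H" "b \<in> H"
    have ac: "a \<in> carrier G" "b \<in> carrier G" using ab Hc by auto
    have "K #> a = K #> b \<longleftrightarrow> a \<otimes> inv b \<in> K" using rcos_eq_iff[OF Ksub ac] .
    also have "\<dots> \<longleftrightarrow> g \<otimes> (a \<otimes> inv b) \<otimes> inv g \<in> H"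
      unfolding K_def using ab subgroup.m_closed[OF H] subgroup.m_inv_closed[OF H] by auto
    also have "g \<otimes> (a \<otimes> inv b) \<otimes> inv g = (g \<otimes> a) \<otimes> inv (g \<otimes> b)"
      using gc ac by (simp add: m_assoc inv_mult_group)
    also have "(g \<otimes> a) \<otimes> inv (g \<otimes> b) \<in> H \<longleftrightarrow> H #> (g \<otimes> a) = H #> (g \<otimes> b)"
      using rcos_eq_iff[OF H] gc ac by simp
    finally show "K #> a = K #> b \<longleftrightarrow> H #> (g \<otimes> a) = H #> (g \<otimes> b)" .
  qed
  have c3: "(\<lambda>b. H #> (g \<otimes> b)) ` H = Rc G H g"
  proof
    show "(\<lambda>b. H #> (g \<otimes> b)) ` H \<subseteq> Rc G H g"
    proof
      fix c assume "c \<in> (\<lambda>b. H #> (g \<otimes> b)) ` H"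
      then obtain b where b: "b \<in> H" "c = H #> (g \<otimes> b)" by blast
      have "g \<otimes> b = \<one> \<otimes> g \<otimes> b" using gc b Hc by auto
      then have "g \<otimes> b \<in> dcos G H g" unfolding dcos_iff using b subgroup.one_closed[OF H] by blast
      then show "c \<in> Rc G H g" unfolding Rc_def using b by blast
    qed
  next
    show "Rc G H g \<subseteq> (\<lambda>b. H #> (g \<otimes> b)) ` H"
    proof
      fix c assume "c \<in> Rc G H g"
      then obtain y where y: "y \<in> dcos G H g" "c = H #> y" unfolding Rc_def by blast
      then obtain a b where ab: "a \<in> H" "b \<in> H" "y = a \<otimes> g \<otimes> b" unfolding dcos_iff by blast
      have abc: "a \<in> carrier G" "b \<in> carrier G" using ab Hc by auto
      have "(a \<otimes> g \<otimes> b) \<otimes> inv (g \<otimes> b) = a" using abc gc by (simp add: m_assoc inv_mult_group)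
      then have "H #> y = H #> (g \<otimes> b)" using rcos_eq_iff[OF H] ab abc gc by simp
      then show "c \<in> (\<lambda>b. H #> (g \<otimes> b)) ` H" using y ab by blast
    qed
  qed
  have cardH: "card H = card (Rc G H x) * card K" using c1 c2' c3 RcEq by simp
  define M where "M = K \<union> (\<lambda>k. g \<otimes> k) ` K"
  have Kmem: "k \<in> H" "g \<otimes> k \<otimes> inv g \<in> H" "k \<in> carrier G" if "k \<in> K" for k
    using that Hc unfolding K_def by auto
  have Msub: "subgroup M G"
  proof (rule subgroupI)
    show "M \<subseteq> carrier G" unfolding M_def using Kc gc by auto
    show "M \<noteq> {}" unfolding M_def using zK by auto
  next
    fix a assume "a \<in> M"
    then consider "a \<in> K" | k where "k \<in> K" "a = g \<otimes> k" unfolding M_def by blast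
    then show "inv a \<in> M"
    proof cases
      case 1 then show ?thesis unfolding M_def using subgroup.m_inv_closed[OF Ksub] by auto
    next
      case 2
      have kc: "k \<in> carrier G" using Kmem 2 by auto
      have ik: "inv k \<in> K" using subgroup.m_inv_closed[OF Ksub] 2 by auto
      have izK: "inv z \<in> K" using subgroup.m_inv_closed[OF Ksub zK] .
      have "(inv g \<otimes> inv k \<otimes> g) \<otimes> inv z \<in> K"
        using c2[OF ik] izK subgroup.m_closed[OF Ksub] by blast
      moreover have "inv a = g \<otimes> ((inv g \<otimes> inv k \<otimes> g) \<otimes> inv z)"
        unfolding z_def 2 using gc kc by (simp add: m_assoc inv_mult_group)
      ultimately show ?thesis unfolding M_def by blast
    qed
  next
    fix a b assume a: "a \<in> M" and b: "b \<in> M"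
    from a consider "a \<in> K" | k1 where "k1 \<in> K" "a = g \<otimes> k1" unfolding M_def by blast
    then show "a \<otimes> b \<in> M"
    proof cases
      case 1
      from b consider "b \<in> K" | k2 where "k2 \<in> K" "b = g \<otimes> k2" unfolding M_def by blast
      then show ?thesis
      proof cases
        case 1 then show ?thesis using \<open>a \<in> K\<close> subgroup.m_closed[OF Ksub] unfolding M_def by blast
      next
        case 2
        have "a \<otimes> b = g \<otimes> ((inv g \<otimes> a \<otimes> g) \<otimes> k2)"
          using 2 gc Kmem[OF \<open>a \<in> K\<close>] Kmem[OF 2(1)] by (simp add: m_assoc)
        moreover have "(inv g \<otimes> a \<otimes> g) \<otimes> k2 \<in> K"
          using c2[OF \<open>a \<in> K\<close>] 2 subgroup.m_closed[OF Ksub] by blast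
        ultimately show ?thesis unfolding M_def by blast
      qed
    next
      case 2
      note k1 = 2
      from b consider "b \<in> K" | k2 where "k2 \<in> K" "b = g \<otimes> k2" unfolding M_def by blast
      then show ?thesis
      proof cases
        case 1
        have "a \<otimes> b = g \<otimes> (k1 \<otimes> b)" using k1 gc Kmem[OF k1(1)] Kmem[OF 1] by (simp add: m_assoc)
        moreover have "k1 \<otimes> b \<in> K" using k1 1 subgroup.m_closed[OF Ksub] by blast
        ultimately show ?thesis unfolding M_def by blast
      next
        case 2
        have "a \<otimes> b = z \<otimes> ((inv g \<otimes> k1 \<otimes> g) \<otimes> k2)"
          unfolding z_def using k1 2 gc Kmem[OF k1(1)] Kmem[OF 2(1)] by (simp add: m_assoc)
        moreover have "z \<otimes> ((inv g \<otimes> k1 \<otimes> g) \<otimes> k2) \<in> K"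
          using c2[OF k1(1)] 2 zK subgroup.m_closed[OF Ksub] by blast
        ultimately show ?thesis unfolding M_def by simp
      qed
    qed
  qed
  have "K \<inter> (\<lambda>k. g \<otimes> k) ` K = {}"
  proof (rule ccontr)
    assume "K \<inter> (\<lambda>k. g \<otimes> k) ` K \<noteq> {}"
    then obtain k k' where kk: "k \<in> K" "k' \<in> K" "k' = g \<otimes> k" by blast
    then have "g = k' \<otimes> inv k" using gc Kmem by (simp add: m_assoc)
    moreover have "k' \<otimes> inv k \<in> H" using kk KH subgroup.m_closed[OF H] subgroup.m_inv_closed[OF H] by blast
    ultimately have "g \<in> H" by simp
    then show False using gH by simp
  qed
  moreover have "card ((\<lambda>k. g \<otimes> k) ` K) = card K"
    by (rule card_image) (use gc Kc in \<open>auto simp: inj_on_def subset_iff\<close>)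
  ultimately have cardM: "card M = 2 * card K" unfolding M_def using finK
    by (simp add: card_Un_disjoint)
  have LH: "card (rcosets H) * card H = order G" using lagrange[OF H] .
  have LM: "card (rcosets M) * card M = order G" using lagrange[OF Msub] .
  have "card (rcosets H) * card (Rc G H x) * card K = card (rcosets M) * 2 * card K"
    using LH LM cardH cardM by (simp add: mult.assoc)
  then have "card (rcosets H) * card (Rc G H x) = card (rcosets M) * 2" using Kpos by simp
  then have "even (card (rcosets H) * card (Rc G H x))" by simp
  then show ?thesis using oi oR by simp
qed

end


lemma SL2_mult_simp [simp]:
  "SL2_mult (a,b,c,d) (e,f,g,h) = (a*e + b*g, a*f + b*h, c*e + d*g, c*f + d*h)"
  by (simp add: SL2_mult_def)

lemma SL2_carrier [simp]: "(a,b,c,d) \<in> carrier SL2 \<longleftrightarrow> a * d - b * c = 1"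
  by (simp add: SL2_def)

lemma SL2_mult: "x \<otimes>\<^bsub>SL2\<^esub> y = SL2_mult x y"
  by (simp add: SL2_def)

lemma SL2_one [simp]: "\<one>\<^bsub>SL2\<^esub> = (1,0,0,1)"
  by (simp add: SL2_def)

lemma SL2_group: "group (SL2 :: ('a::field \<times> 'a \<times> 'a \<times> 'a) monoid)"
proof (rule groupI)
  fix x y :: "'a \<times> 'a \<times> 'a \<times> 'a"
  assume "x \<in> carrier SL2" "y \<in> carrier SL2"
  then obtain a b c d e f g h where x: "x = (a,b,c,d)" "a * d - b * c = 1"
    and y: "y = (e,f,g,h)" "e * h - f * g = 1" by (cases x, cases y) auto
  have "(a*e + b*g) * (c*f + d*h) - (a*f + b*h) * (c*e + d*g) = (a * d - b * c) * (e * h - f * g)"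
    by (simp add: algebra_simps)
  then show "x \<otimes>\<^bsub>SL2\<^esub> y \<in> carrier SL2" using x y by (simp add: SL2_mult)
next
  show "\<one>\<^bsub>SL2\<^esub> \<in> carrier (SL2 :: ('a::field \<times> 'a \<times> 'a \<times> 'a) monoid)" by simp
next
  fix x y z :: "'a \<times> 'a \<times> 'a \<times> 'a"
  show "x \<otimes>\<^bsub>SL2\<^esub> y \<otimes>\<^bsub>SL2\<^esub> z = x \<otimes>\<^bsub>SL2\<^esub> (y \<otimes>\<^bsub>SL2\<^esub> z)"
    by (cases x, cases y, cases z) (simp add: algebra_simps SL2_mult)
next
  fix x :: "'a \<times> 'a \<times> 'a \<times> 'a"
  show "\<one>\<^bsub>SL2\<^esub> \<otimes>\<^bsub>SL2\<^esub> x = x" by (cases x) (simp add: SL2_mult)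
next
  fix x :: "'a \<times> 'a \<times> 'a \<times> 'a"
  assume "x \<in> carrier SL2"
  then obtain a b c d where x: "x = (a,b,c,d)" "a * d - b * c = 1" by (cases x) auto
  show "\<exists>y\<in>carrier SL2. y \<otimes>\<^bsub>SL2\<^esub> x = \<one>\<^bsub>SL2\<^esub>"
    by (rule bexI[of _ "(d, -b, -c, a)"]) (use x in \<open>auto simp: algebra_simps SL2_mult\<close>)
qed


lemma char2_neg: assumes "1 + 1 = (0::'a::field)" shows "- (x::'a) = x"
proof -
  have "x + x = (1 + 1) * x" by (simp add: algebra_simps)
  then have "x + x = 0" using assms by simp
  then show ?thesis by (simp add: eq_neg_iff_add_eq_0)
qed

lemma diag_lemma:
  fixes a b c d :: "'a::field"
  assumes "a + d \<noteq> 0" "a*d - b*c = 1" "a*a + b*c = 1" "a*b + b*d = 0" "c*a + d*c = 0"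
  shows "b = 0 \<and> c = 0 \<and> d = a \<and> a * a = 1"
proof -
  have "b * (a + d) = 0" using assms(4) by (simp add: algebra_simps)
  then have b: "b = 0" using assms(1) by simp
  have "c * (a + d) = 0" using assms(5) by (simp add: algebra_simps)
  then have c: "c = 0" using assms(1) by simp
  have ad: "a * d = 1" and aa: "a * a = 1" using assms b c by auto
  have "a = a * (a * d)" using ad by simp
  also have "\<dots> = (a * a) * d" by (simp add: mult.assoc)
  finally have "a = d" using aa by simp
  then show ?thesis using b c aa by simp
qed

lemma invol_odd_char:
  fixes a b c d :: "'a::field"
  assumes ch: "1 + 1 \<noteq> (0::'a)" and h: "a*d - b*c = 1" "a*a + b*c = 1" "a*b + b*d = 0" "c*a + d*c = 0"
  shows "(a,b,c,d) = (1,0,0,1) \<or> (a,b,c,d) = (-1,0,0,-1)"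
proof -
  have "a + d \<noteq> 0"
  proof
    assume "a + d = 0"
    then have "d = - a" by (simp add: eq_neg_iff_add_eq_0 add.commute)
    then have "-(a*a + b*c) = 1" using h(1) by (simp add: algebra_simps)
    then have "1 + 1 = (0::'a)" using h(2) by simp
    then show False using ch by simp
  qed
  then have D: "b = 0 \<and> c = 0 \<and> d = a \<and> a * a = 1" using diag_lemma h by blast
  then have "(a - 1) * (a + 1) = 0" by (simp add: algebra_simps)
  then have "a = 1 \<or> a = -1" by (auto simp: eq_neg_iff_add_eq_0)
  then show ?thesis using D by auto
qed

lemma sq_char2:
  fixes a b c d :: "'a::field"
  assumes ch: "1 + 1 = (0::'a)" and h: "a*d - b*c = 1"
  shows "(a*a + b*c = 1 \<and> a*b + b*d = 0 \<and> c*a + d*c = 0 \<and> c*b + d*d = 1) \<longleftrightarrow> a + d = 0"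
proof
  assume A: "a*a + b*c = 1 \<and> a*b + b*d = 0 \<and> c*a + d*c = 0 \<and> c*b + d*d = 1"
  show "a + d = 0"
  proof (rule ccontr)
    assume "a + d \<noteq> 0"
    then have "d = a" using diag_lemma[of a d b c] A h by blast
    then have "a + d = (1 + 1) * a" by (simp add: algebra_simps)
    then show False using ch \<open>a + d \<noteq> 0\<close> by simp
  qed
next
  assume "a + d = 0"
  then have "d = - a" by (simp add: eq_neg_iff_add_eq_0 add.commute)
  then have d: "d = a" using char2_neg[OF ch, of a] by simp
  have nbc: "- (b*c) = b*c" using char2_neg[OF ch] .
  have "a*a + b*c = a * d - b * c" using d nbc by (simp add: algebra_simps)
  then have 1: "a*a + b*c = 1" using h by simp
  have 2: "a*b + b*d = (1+1)*(a*b)" using d by (simp add: algebra_simps)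
  have 3: "c*a + d*c = (1+1)*(a*c)" using d by (simp add: algebra_simps)
  have 4: "c*b + d*d = a*a + b*c" using d by (simp add: algebra_simps)
  have 2: "a*b + b*d = 0" using 2 ch by (metis mult_zero_left)
  have 3: "c*a + d*c = 0" using 3 ch by (metis mult_zero_left)
  show "a*a + b*c = 1 \<and> a*b + b*d = 0 \<and> c*a + d*c = 0 \<and> c*b + d*d = 1"
    using 1 2 3 4 by simp
qed

lemma trace_sq_char2:
  fixes a b c d :: "'a::field"
  assumes ch: "1 + 1 = (0::'a)" and h: "a*d - b*c = 1"
  shows "(a*a + b*c) + (c*b + d*d) = (a + d) * (a + d)"
proof -
  have "(a + d) * (a + d) - ((a*a + b*c) + (c*b + d*d)) = (1 + 1) * (a*d - b*c)"
    by (simp add: algebra_simps)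
  then have "(a + d) * (a + d) - ((a*a + b*c) + (c*b + d*d)) = 0" using ch by (metis mult_zero_left)
  then show ?thesis by (simp only: right_minus_eq)
qed


lemma SL2_invol:
  assumes ch: "1 + 1 \<noteq> (0::'a::field)" and t: "t \<in> carrier (SL2::('a \<times> 'a \<times> 'a \<times> 'a) monoid)"
    and tt: "t \<otimes>\<^bsub>SL2\<^esub> t = \<one>\<^bsub>SL2\<^esub>"
  shows "t = (1,0,0,1) \<or> t = (-1,0,0,-1)"
proof -
  obtain a b c d where x: "t = (a,b,c,d)" by (cases t) auto
  show ?thesis using invol_odd_char[OF ch, of a d b c] t tt unfolding x by (simp add: SL2_mult)
qed

lemma SL2_L4:
  assumes ch: "1 + 1 = (0::'a::field)" and u: "u \<in> carrier (SL2::('a \<times> 'a \<times> 'a \<times> 'a) monoid)"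
    and uu: "(u \<otimes>\<^bsub>SL2\<^esub> u) \<otimes>\<^bsub>SL2\<^esub> (u \<otimes>\<^bsub>SL2\<^esub> u) = \<one>\<^bsub>SL2\<^esub>"
  shows "u \<otimes>\<^bsub>SL2\<^esub> u = \<one>\<^bsub>SL2\<^esub>"
proof -
  interpret S: group "SL2::('a \<times> 'a \<times> 'a \<times> 'a) monoid" by (rule SL2_group)
  obtain a b c d where x: "u = (a,b,c,d)" by (cases u) auto
  have det: "a * d - b * c = 1" using u x by simp
  define A B C D where "A = a*a + b*c" "B = a*b + b*d" "C = c*a + d*c" "D = c*b + d*d"
  have w: "u \<otimes>\<^bsub>SL2\<^esub> u = (A,B,C,D)" unfolding A_B_C_D_def x by (simp add: SL2_mult)
  have "(A,B,C,D) \<in> carrier SL2" using S.m_closed[OF u u] w by simp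
  then have detw: "A * D - B * C = 1" by simp
  have "A*A + B*C = 1 \<and> A*B + B*D = 0 \<and> C*A + D*C = 0 \<and> C*B + D*D = 1"
    using uu w by (simp add: SL2_mult)
  then have "A + D = 0" using sq_char2[OF ch detw] by blast
  then have "(a + d) * (a + d) = 0" using trace_sq_char2[OF ch det] unfolding A_B_C_D_def by simp
  then have "a + d = 0" by simp
  then have "a*a + b*c = 1 \<and> a*b + b*d = 0 \<and> c*a + d*c = 0 \<and> c*b + d*d = 1"
    using sq_char2[OF ch det] by blast
  then show ?thesis unfolding x by (simp add: SL2_mult)
qed

lemma even_card_char2:
  assumes "even (card (UNIV::'a::{field,finite} set))"
  shows "1 + 1 = (0::'a)"
proof (rule ccontr)
  assume ch: "1 + 1 \<noteq> (0::'a)"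
  have i: "- x = x \<longleftrightarrow> x = 0" for x :: 'a
  proof
    assume "- x = x"
    then have "x + x = 0" by (metis add.right_inverse)
    then have "(1 + 1) * x = 0" by (simp add: algebra_simps)
    then show "x = 0" using ch by simp
  qed simp
  have "{x\<in>(UNIV::'a set). - x = x} = {0}" using i by auto
  moreover have "even (card (UNIV::'a set)) \<longleftrightarrow> even (card {x\<in>(UNIV::'a set). - x = x})"
    by (rule invol_parity2) auto
  ultimately show False using assms by simp
qed

lemma odd_card_char:
  assumes "odd (card (UNIV::'a::{field,finite} set))"
  shows "1 + 1 \<noteq> (0::'a)"
proof
  assume ch: "1 + 1 = (0::'a)"
  have "{x\<in>(UNIV::'a set). x + 1 = x} = {}" by auto
  moreover have "even (card (UNIV::'a set)) \<longleftrightarrow> even (card {x\<in>(UNIV::'a set). x + 1 = x})"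
  proof (rule invol_parity2)
    have ch2: "(2::'a) = 0" using ch by simp
    show "\<forall>x\<in>UNIV. x + 1 \<in> UNIV \<and> x + 1 + 1 = (x::'a)" by (simp add: add.assoc ch2)
  qed simp
  ultimately show False using assms by simp
qed

lemma two_decomp: "(n::nat) > 0 \<Longrightarrow> \<exists>e m. n = 2^e * m \<and> odd m"
proof (induct n rule: less_induct)
  case (less n)
  show ?case
  proof (cases "odd n")
    case True then show ?thesis by (intro exI[of _ 0] exI[of _ n]) simp
  next
    case False
    then obtain k where k: "n = 2 * k" by blast
    then have "k > 0" "k < n" using less.prems by auto
    then obtain e m where "k = 2^e * m" "odd m" using less.hyps by blast
    then show ?thesis using k by (intro exI[of _ "Suc e"] exI[of _ m]) simp
  qed
qed

lemma SL2_pw: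
  assumes ch: "1 + 1 = (0::'a::{field,finite})"
  shows "\<exists>m::nat. odd m \<and> (\<forall>g\<in>carrier (SL2::('a \<times> 'a \<times> 'a \<times> 'a) monoid).
            (g \<otimes>\<^bsub>SL2\<^esub> g) [^]\<^bsub>SL2\<^esub> m = \<one>\<^bsub>SL2\<^esub>)"
proof -
  interpret S: group "SL2::('a \<times> 'a \<times> 'a \<times> 'a) monoid" by (rule SL2_group)
  have fin: "finite (carrier (SL2::('a \<times> 'a \<times> 'a \<times> 'a) monoid))" by simp
  have "order (SL2::('a \<times> 'a \<times> 'a \<times> 'a) monoid) > 0"
    using fin S.one_closed unfolding order_def by (auto simp: card_gt_0_iff)
  then obtain e m where em: "order (SL2::('a \<times> 'a \<times> 'a \<times> 'a) monoid) = 2^e * m" "odd m"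
    using two_decomp by blast
  have chain: "\<And>u. u \<in> carrier (SL2::('a \<times> 'a \<times> 'a \<times> 'a) monoid) \<Longrightarrow>
      u [^]\<^bsub>SL2\<^esub> ((2::nat)^k) = \<one>\<^bsub>SL2\<^esub> \<Longrightarrow> u \<otimes>\<^bsub>SL2\<^esub> u = \<one>\<^bsub>SL2\<^esub>" for k
  proof (induct k)
    case 0
    then have "u = \<one>\<^bsub>SL2\<^esub>" by (simp del: SL2_one)
    then show ?case by simp
  next
    case (Suc k)
    have uc: "u \<otimes>\<^bsub>SL2\<^esub> u \<in> carrier SL2" using S.m_closed[OF Suc.prems(1) Suc.prems(1)] .
    have "u \<otimes>\<^bsub>SL2\<^esub> u = u [^]\<^bsub>SL2\<^esub> (2::nat)" using Suc.prems
      by (simp add: numeral_2_eq_2 S.nat_pow_Suc)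
    then have "(u \<otimes>\<^bsub>SL2\<^esub> u) [^]\<^bsub>SL2\<^esub> ((2::nat)^k) = u [^]\<^bsub>SL2\<^esub> ((2::nat)^Suc k)"
      using Suc.prems by (simp add: S.nat_pow_pow)
    then have "(u \<otimes>\<^bsub>SL2\<^esub> u) [^]\<^bsub>SL2\<^esub> ((2::nat)^k) = \<one>\<^bsub>SL2\<^esub>" using Suc.prems by simp
    then have "(u \<otimes>\<^bsub>SL2\<^esub> u) \<otimes>\<^bsub>SL2\<^esub> (u \<otimes>\<^bsub>SL2\<^esub> u) = \<one>\<^bsub>SL2\<^esub>"
      using Suc.hyps[OF uc] by blast
    then show ?case using SL2_L4[OF ch Suc.prems(1)] by blast
  qed
  have "(g \<otimes>\<^bsub>SL2\<^esub> g) [^]\<^bsub>SL2\<^esub> m = \<one>\<^bsub>SL2\<^esub>" if g: "g \<in> carrier SL2" for g :: "'a \<times> 'a \<times> 'a \<times> 'a"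
  proof -
    define u where "u = g [^]\<^bsub>SL2\<^esub> m"
    have uc: "u \<in> carrier SL2" unfolding u_def using g by simp
    have "u [^]\<^bsub>SL2\<^esub> ((2::nat)^e) = g [^]\<^bsub>SL2\<^esub> (m * 2^e)"
      unfolding u_def using g by (simp add: S.nat_pow_pow)
    also have "\<dots> = \<one>\<^bsub>SL2\<^esub>" using S.pow_order_eq_1[OF g] em by (simp add: mult.commute)
    finally have uu: "u \<otimes>\<^bsub>SL2\<^esub> u = \<one>\<^bsub>SL2\<^esub>" using chain[OF uc] by blast
    have "g \<otimes>\<^bsub>SL2\<^esub> g = g [^]\<^bsub>SL2\<^esub> (2::nat)" using g
      by (simp add: numeral_2_eq_2 S.nat_pow_Suc)
    then have "(g \<otimes>\<^bsub>SL2\<^esub> g) [^]\<^bsub>SL2\<^esub> m = g [^]\<^bsub>SL2\<^esub> (m + m)"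
      using g by (simp add: S.nat_pow_pow mult_2)
    also have "\<dots> = u \<otimes>\<^bsub>SL2\<^esub> u" unfolding u_def using g by (simp add: S.nat_pow_mult)
    finally show ?thesis using uu by simp
  qed
  then show ?thesis using em(2) by blast
qed


lemma two_part_1: "(n::nat) > 0 \<Longrightarrow> two_part n = 1 \<longleftrightarrow> odd n"
  unfolding two_part_def using multiplicity_eq_zero_iff[of n "2::nat"] by simp

lemma two_part_mult: 
  assumes "(a::nat) > 0" "(n::nat) > 0"
  shows "two_part n = two_part (a * n) \<longleftrightarrow> odd a"
proof -
  have p: "prime_elem (2::nat)" by simp
  have "multiplicity 2 (a * n) = multiplicity 2 a + multiplicity 2 n"
    using prime_elem_multiplicity_mult_distrib[OF p] assms by simp
  then have "two_part n = two_part (a * n) \<longleftrightarrow> multiplicity 2 a = 0"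
    unfolding two_part_def by simp
  also have "\<dots> \<longleftrightarrow> odd a" using multiplicity_eq_zero_iff[of a "2::nat"] assms by simp
  finally show ?thesis .
qed

theorem lemma4p6:
  fixes G :: "('a::{field,finite} \<times> 'a \<times> 'a \<times> 'a) monoid"
  assumes "G = SL2"
  shows "(even (card (UNIV :: 'a set)) \<longrightarrow> (\<forall>H. subgroup H G \<longrightarrow> subgroup_perfect_code G H)) \<and>
         (odd (card (UNIV :: 'a set)) \<longrightarrow> (\<forall>H. subgroup H G \<longrightarrow>
             (subgroup_perfect_code G H \<longleftrightarrow>
                two_part (card H) = 1 \<or> two_part (card H) = two_part (card (carrier G)))))"
proof -
  interpret S: group G using SL2_group assms by simp
  have fin: "finite (carrier G)" by simp
  have pc_of_hyp: "subgroup_perfect_code G H"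
    if H: "subgroup H G" and hyp: "\<forall>x\<in>carrier G. inv\<^bsub>G\<^esub> x \<in> dcos G H x \<and> odd (card (Rc G H x))
         \<longrightarrow> (\<exists>y\<in>dcos G H x. y \<otimes>\<^bsub>G\<^esub> y = \<one>\<^bsub>G\<^esub>)" for H
  proof -
    obtain T where "T \<subseteq> carrier G" "\<forall>t\<in>T. inv\<^bsub>G\<^esub> t \<in> T" "\<forall>y\<in>carrier G. \<exists>!t. t \<in> T \<and> t \<in> H #>\<^bsub>G\<^esub> y"
      using S.transversal_exists[OF H fin hyp] by blast
    then show ?thesis using S.pc_from_T[OF H] by blast
  qed
  have Hpos: "card H > 0" if H: "subgroup H G" for H
    using subgroup.finite_imp_card_positive[OF H] fin subgroup.subset[OF H] by (meson finite_subset)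
  have part1: "subgroup_perfect_code G H" if ev: "even (card (UNIV :: 'a set))" and H: "subgroup H G" for H
  proof -
    have ch: "1 + 1 = (0::'a)" using even_card_char2[OF ev] .
    obtain m :: nat where m: "odd m" "\<forall>g\<in>carrier G. (g \<otimes>\<^bsub>G\<^esub> g) [^]\<^bsub>G\<^esub> m = \<one>\<^bsub>G\<^esub>"
      using SL2_pw[OF ch] assms by blast
    show ?thesis
    proof (rule pc_of_hyp[OF H], intro ballI impI)
      fix x assume x: "x \<in> carrier G" and "inv\<^bsub>G\<^esub> x \<in> dcos G H x \<and> odd (card (Rc G H x))"
      then have ix: "inv\<^bsub>G\<^esub> x \<in> dcos G H x" by simp
      show "\<exists>y\<in>dcos G H x. y \<otimes>\<^bsub>G\<^esub> y = \<one>\<^bsub>G\<^esub>"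
        by (rule S.hyp_from_power[OF H x ix]) (use m in blast)
    qed
  qed
  have part2: "subgroup_perfect_code G H \<longleftrightarrow>
                two_part (card H) = 1 \<or> two_part (card H) = two_part (card (carrier G))"
    if od: "odd (card (UNIV :: 'a set))" and H: "subgroup H G" for H
  proof -
    have ch: "1 + 1 \<noteq> (0::'a)" using odd_card_char[OF od] .
    have Hc: "H \<subseteq> carrier G" using subgroup.subset[OF H] .
    have finH: "finite H" using fin Hc by (rule finite_subset[rotated])
    have lag: "card (rcosets\<^bsub>G\<^esub> H) * card H = card (carrier G)"
      using S.lagrange[OF H] unfolding order_def .
    have ipos: "card (rcosets\<^bsub>G\<^esub> H) > 0" using lag Hpos[OF H] fin S.one_closed
      by (metis card_gt_0_iff empty_iff mult_is_0 neq0_conv)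
    have tp2: "two_part (card H) = two_part (card (carrier G)) \<longleftrightarrow> odd (card (rcosets\<^bsub>G\<^esub> H))"
      using two_part_mult[OF ipos Hpos[OF H]] lag by simp
    have tp1: "two_part (card H) = 1 \<longleftrightarrow> odd (card H)" using two_part_1[OF Hpos[OF H]] .
    show ?thesis
    proof
      assume pc: "subgroup_perfect_code G H"
      show "two_part (card H) = 1 \<or> two_part (card H) = two_part (card (carrier G))"
      proof (cases "odd (card H)")
        case True then show ?thesis using tp1 by simp
      next
        case False
        define mI :: "'a \<times> 'a \<times> 'a \<times> 'a" where "mI = (-1,0,0,-1)"
        have invol: "t = \<one>\<^bsub>G\<^esub> \<or> t = mI" if "t \<in> carrier G" "inv\<^bsub>G\<^esub> t = t" for t
        proof -
          have "t \<otimes>\<^bsub>G\<^esub> t = \<one>\<^bsub>G\<^esub>" using that S.r_inv[OF that(1)] by simp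
          then show ?thesis using SL2_invol[OF ch] that assms unfolding mI_def by simp
        qed
        have mIH: "mI \<in> H"
        proof (rule ccontr)
          assume nm: "mI \<notin> H"
          have "{h\<in>H. inv\<^bsub>G\<^esub> h = h} = {\<one>\<^bsub>G\<^esub>}"
          proof (intro equalityI subsetI)
            fix h assume "h \<in> {h\<in>H. inv\<^bsub>G\<^esub> h = h}"
            then have "h \<in> H" "inv\<^bsub>G\<^esub> h = h" by auto
            then show "h \<in> {\<one>\<^bsub>G\<^esub>}" using invol[of h] Hc nm by blast
          next
            fix h assume "h \<in> {\<one>\<^bsub>G\<^esub>}"
            then show "h \<in> {h\<in>H. inv\<^bsub>G\<^esub> h = h}" using subgroup.one_closed[OF H] S.inv_one by simp
          qed
          moreover have "even (card H) \<longleftrightarrow> even (card {h\<in>H. inv\<^bsub>G\<^esub> h = h})"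
            by (rule invol_parity2[OF finH]) (use Hc subgroup.m_inv_closed[OF H] in auto)
          ultimately show False using False by simp
        qed
        obtain T where T: "T \<subseteq> carrier G" "\<forall>t\<in>T. inv\<^bsub>G\<^esub> t \<in> T"
          "\<forall>y\<in>carrier G. \<exists>!t. t \<in> T \<and> t \<in> H #>\<^bsub>G\<^esub> y"
          using S.T_from_pc[OF pc] by blast
        have H1: "H #>\<^bsub>G\<^esub> \<one>\<^bsub>G\<^esub> = H" using S.coset_mult_one[OF Hc] .
        obtain t0 where t0: "t0 \<in> T" "t0 \<in> H" and t0u: "\<And>t. t \<in> T \<Longrightarrow> t \<in> H \<Longrightarrow> t = t0"
          using T(3) S.one_closed H1 by metis
        have finT: "finite T" using fin T(1) by (rule finite_subset[rotated])
        have fixT: "{t\<in>T. inv\<^bsub>G\<^esub> t = t} = {t0}"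
        proof
          show "{t\<in>T. inv\<^bsub>G\<^esub> t = t} \<subseteq> {t0}"
          proof
            fix t assume t: "t \<in> {t\<in>T. inv\<^bsub>G\<^esub> t = t}"
            then have "t = \<one>\<^bsub>G\<^esub> \<or> t = mI" using invol[of t] T(1) by blast
            then have "t \<in> H" using mIH subgroup.one_closed[OF H] by auto
            then show "t \<in> {t0}" using t0u t by auto
          qed
        next
          have "inv\<^bsub>G\<^esub> t0 \<in> T" "inv\<^bsub>G\<^esub> t0 \<in> H" using T(2) t0 subgroup.m_inv_closed[OF H] by auto
          then have "inv\<^bsub>G\<^esub> t0 = t0" using t0u by blast
          then show "{t0} \<subseteq> {t\<in>T. inv\<^bsub>G\<^esub> t = t}" using t0 by auto
        qed
        have "even (card T) \<longleftrightarrow> even (card {t\<in>T. inv\<^bsub>G\<^esub> t = t})"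
          by (rule invol_parity2[OF finT]) (use T in auto)
        then have "odd (card T)" using fixT by simp
        then have "odd (card (rcosets\<^bsub>G\<^esub> H))" using S.card_transversal[OF H T(1) T(3)] by simp
        then show ?thesis using tp2 by simp
      qed
    next
      assume "two_part (card H) = 1 \<or> two_part (card H) = two_part (card (carrier G))"
      then show "subgroup_perfect_code G H"
      proof
        assume "two_part (card H) = 1"
        then have oH: "odd (card H)" using tp1 by simp
        show ?thesis
        proof (rule pc_of_hyp[OF H], intro ballI impI)
          fix x assume x: "x \<in> carrier G" and "inv\<^bsub>G\<^esub> x \<in> dcos G H x \<and> odd (card (Rc G H x))"
          then have ix: "inv\<^bsub>G\<^esub> x \<in> dcos G H x" by simp
          show "\<exists>y\<in>dcos G H x. y \<otimes>\<^bsub>G\<^esub> y = \<one>\<^bsub>G\<^esub>"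
            by (rule S.hyp_from_power[OF H x ix]) (use oH S.sub_pow_card[OF H] in blast)
        qed
      next
        assume "two_part (card H) = two_part (card (carrier G))"
        then have oi: "odd (card (rcosets\<^bsub>G\<^esub> H))" using tp2 by simp
        show ?thesis
        proof (rule pc_of_hyp[OF H], intro ballI impI)
          fix x assume x: "x \<in> carrier G" and a: "inv\<^bsub>G\<^esub> x \<in> dcos G H x \<and> odd (card (Rc G H x))"
          show "\<exists>y\<in>dcos G H x. y \<otimes>\<^bsub>G\<^esub> y = \<one>\<^bsub>G\<^esub>"
            using S.hyp_odd_index[OF H fin oi x] a by blast
        qed
      qed
    qed
  qed
  show ?thesis using part1 part2 by blast
qed


end
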